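(* Let $\hbar,m_0,c>0$, put $E_0=m_0c^2$ and $l_0=\frac{\hbar}{m_0c}$. Let $f_n\in\mathbb{C}$ be arbitrary constants, indexed by the positive integers $n$ with $n l_0<1$, and define for $x,t\in\mathbb{R}$ $$ Y(x,t)=\exp\left(-\frac{iE_0t}{\hbar}\right)\sum_{\substack{n\geq 1\\ n l_0<1}}f_n\exp\left(i\frac{E_0l_0^2n^2 t}{2\hbar\sqrt{\left|l_0^2n^2-1\right|}}\right)e^{-nx}. $$ Then $Y$ satisfies $$ i\hbar\frac{\partial Y}{\partial t}=E_0Y+\frac{E_0}{2}\sum^{\infty}_{n=0}(-1)^{n+1}\binom{-1/2}{n}\left(\frac{\hbar}{m_0c}\right)^{2n+2}\frac{\partial^{2n+2}Y}{\partial x^{2n+2}} $$ for all $x,t\in\mathbb{R}$ (the series on the right converging), and $Y(x,0)=\sum_{n\geq1,\,nl_0<1}f_ne^{-nx}$.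
   Context: $\binom{-1/2}{n}=\frac{(-1/2)(-3/2)\cdots(-1/2-n+1)}{n!}$ denotes the generalized binomial coefficient. The quantity $l_0$ is called the Compton wavelength of the particle. *)

theory Defs
  imports "HOL-Analysis.Analysis"
begin

definition xderiv :: "(real \<Rightarrow> complex) \<Rightarrow> real \<Rightarrow> complex" where
  "xderiv g = (\<lambda>x. vector_derivative g (at x))"

end

theory Submission
  imports Defs
begin


lemma hvd_cexp:
  "((\<lambda>t::real. exp (\<i> * complex_of_real (b * t))) has_vector_derivative
      (\<i> * complex_of_real b * exp (\<i> * complex_of_real (b * t)))) (at t)"
proof -
  have "((\<lambda>z. exp (\<i> * complex_of_real b * z)) has_field_derivative
      (exp (\<i> * complex_of_real b * of_real t) * (\<i> * complex_of_real b))) (at (of_real t))"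
    by (auto intro!: derivative_eq_intros)
  from has_vector_derivative_real_field[OF this, of UNIV]
  show ?thesis by (simp add: mult_ac)
qed

definition Fk :: "nat set \<Rightarrow> (nat \<Rightarrow> complex) \<Rightarrow> nat \<Rightarrow> real \<Rightarrow> complex" where
  "Fk N c k = (\<lambda>x. \<Sum>n\<in>N. c n * complex_of_real ((- real n)^k * exp (- real n * x)))"

lemma Fk_deriv: "(Fk N c k has_vector_derivative Fk N c (Suc k) x) (at x)"
  unfolding Fk_def
  apply (rule has_vector_derivative_sum)
  apply (rule has_vector_derivative_mult_right)
  apply (rule has_vector_derivative_of_real)
  apply (auto intro!: derivative_eq_intros)
  done

lemma xderiv_Fk: "xderiv (Fk N c k) = Fk N c (Suc k)"
  unfolding xderiv_def using Fk_deriv by (auto intro!: ext vector_derivative_at)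

lemma xderiv_pow_Fk: "(xderiv ^^ k) (Fk N c 0) = Fk N c k"
  by (induction k) (auto simp: xderiv_Fk)


lemma ser:
  fixes l :: real and q :: real
  assumes "0 \<le> q" "q < 1" "q = l^2"
  shows "(\<lambda>k. (-1)^(k+1) * ((-1/2) gchoose k) * l^(2*k+2)) sums (- q / sqrt (1 - q))"
proof -
  have "\<bar>-q\<bar> < 1" using assms by auto
  from sums_mult[OF gen_binomial_real[OF this, of "-1/2"], of "-q"]
  have 1: "(\<lambda>k. - q * (((-1/2) gchoose k) * (-q)^k)) sums (- q * (1 + - q) powr (-1/2))" .
  have p: "(1 - q) powr (-1/2) = 1 / sqrt (1 - q)"
  proof -
    have "(1 - q) powr (-1/2) = 1 / (1-q) powr (1/2)"
      using powr_minus_divide[of "1-q" "1/2"] by (simp only: minus_divide_left)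
    also have "(1-q) powr (1/2) = sqrt (1-q)" using assms by (simp add: powr_half_sqrt)
    finally show ?thesis .
  qed
  have 2: "- q * (1 + - q) powr (-1/2) = - q / sqrt (1 - q)"
    proof -
    have "1 + - q = 1 - q" by simp
    then show ?thesis using p by simp
  qed
  have 3: "- q * (((-1/2) gchoose k) * (-q)^k) = (-1)^(k+1) * ((-1/2) gchoose k) * l^(2*k+2)" for k
  proof -
    have a: "(-q)^k = (-1)^k * l^(2*k)" unfolding assms(3) power_minus[of "l^2"] power_mult by (rule refl)
    have b: "l^(2*k+2) = l^(2*k) * q" unfolding assms(3) by (rule power_add)
    have c: "(-1::real)^(k+1) = - ((-1)^k)" by simp
    show ?thesis unfolding a b c by (simp only: mult_ac mult_minus_left mult_minus_right)
  qed
  show ?thesis using 1 unfolding 2 3 .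
qed



theorem theorem2:
  fixes hbar m0 c E0 l0 :: real and f :: "nat \<Rightarrow> complex"
    and Y :: "real \<Rightarrow> real \<Rightarrow> complex"
  assumes hbar_pos: "hbar > 0" and m0_pos: "m0 > 0" and c_pos: "c > 0"
  defines "E0 \<equiv> m0 * c^2"
    and "l0 \<equiv> hbar / (m0 * c)"
  defines "Y \<equiv> (\<lambda>x t. exp (- \<i> * complex_of_real (E0 * t / hbar)) *
      (\<Sum>n\<in>{n::nat. n \<ge> 1 \<and> real n * l0 < 1}.
         f n * exp (\<i> * complex_of_real (E0 * l0^2 * (real n)^2 * t /
                    (2 * hbar * sqrt \<bar>l0^2 * (real n)^2 - 1\<bar>)))
             * complex_of_real (exp (- real n * x))))"
  shows "(\<forall>x t. ((\<lambda>t'. Y x t') has_vector_derivative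
                     (vector_derivative (\<lambda>t'. Y x t') (at t))) (at t))
       \<and> (\<forall>t x k. ((xderiv ^^ k) (\<lambda>x'. Y x' t) has_vector_derivative
                     (xderiv ^^ Suc k) (\<lambda>x'. Y x' t) x) (at x))
       \<and> (\<forall>x t. \<exists>S. (\<lambda>k. complex_of_real ((-1)^(k+1) * ((-1/2) gchoose k) * (hbar/(m0*c))^(2*k+2))
                         * (xderiv ^^ (2*k+2)) (\<lambda>x'. Y x' t) x) sums S
                 \<and> \<i> * complex_of_real hbar * vector_derivative (\<lambda>t'. Y x t') (at t)
                     = complex_of_real E0 * Y x t + complex_of_real (E0/2) * S)
       \<and> (\<forall>x. Y x 0 = (\<Sum>n\<in>{n::nat. n \<ge> 1 \<and> real n * l0 < 1}.
                          f n * complex_of_real (exp (- real n * x))))"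
  proof -
  define N where "N = {n::nat. n \<ge> 1 \<and> real n * l0 < 1}"
  have l0pos: "l0 > 0" unfolding l0_def using assms by simp
  have E0pos: "E0 > 0" unfolding E0_def using assms by simp
  have hb: "hbar/(m0*c) = l0" unfolding l0_def ..
  have finN: "finite N"
  proof -
    have "N \<subseteq> {..nat \<lceil>1/l0\<rceil>}"
    proof
      fix n assume "n \<in> N"
      then have "real n * l0 < 1" unfolding N_def by simp
      then have "real n < 1/l0" using l0pos by (simp add: field_simps)
      moreover have "1/l0 \<le> of_int \<lceil>1/l0\<rceil>" by (rule le_of_int_ceiling)
      ultimately have "real_of_int (int n) < of_int \<lceil>1/l0\<rceil>" by (metis of_int_of_nat_eq less_le_trans)
      then have "int n < \<lceil>1/l0\<rceil>" by (simp only: of_int_less_iff)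
      then show "n \<in> {..nat \<lceil>1/l0\<rceil>}" by simp
    qed
    then show ?thesis by (rule finite_subset) simp
  qed
  define w where "w n = E0 * l0^2 * (real n)^2 / (2 * hbar * sqrt \<bar>l0^2 * (real n)^2 - 1\<bar>)" for n
  define b where "b n = w n - E0/hbar" for n
  define A where "A t n = exp (- \<i> * complex_of_real (E0 * t / hbar)) * f n * exp (\<i> * complex_of_real (w n * t))" for t n
  have Aeq: "A t n = f n * exp (\<i> * complex_of_real (b n * t))" for t n
  proof -
    have "- \<i> * complex_of_real (E0 * t / hbar) + \<i> * complex_of_real (w n * t) = \<i> * complex_of_real (b n * t)"
      unfolding b_def by (simp add: algebra_simps)
    then show ?thesis unfolding A_def by (simp add: exp_add[symmetric] mult_ac)
  qed
  have Y1: "Y x t = (\<Sum>n\<in>N. A t n * complex_of_real (exp (- real n * x)))" for x t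
    unfolding Y_def A_def N_def w_def by (simp add: sum_distrib_left mult.assoc)
  have Y2: "(\<lambda>x'. Y x' t) = Fk N (A t) 0" for t
    unfolding Y1 Fk_def by simp
  have Yt: "(\<lambda>t'. Y x t') = (\<lambda>t'. \<Sum>n\<in>N. (f n * complex_of_real (exp (- real n * x))) * exp (\<i> * complex_of_real (b n * t')))" for x
    unfolding Y1 Aeq by (simp add: mult_ac)
  define D where "D x t = (\<Sum>n\<in>N. (f n * complex_of_real (exp (- real n * x))) * (\<i> * complex_of_real (b n) * exp (\<i> * complex_of_real (b n * t))))" for x t
  have hD: "((\<lambda>t'. Y x t') has_vector_derivative D x t) (at t)" for x t
    unfolding Yt D_def by (intro has_vector_derivative_sum has_vector_derivative_mult_right hvd_cexp)
  have vD: "vector_derivative (\<lambda>t'. Y x t') (at t) = D x t" for x t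
    using hD by (rule vector_derivative_at)
  have P1: "\<forall>x t. ((\<lambda>t'. Y x t') has_vector_derivative
                     (vector_derivative (\<lambda>t'. Y x t') (at t))) (at t)"
    using hD vD by simp
  have P2: "\<forall>t x k. ((xderiv ^^ k) (\<lambda>x'. Y x' t) has_vector_derivative
                     (xderiv ^^ Suc k) (\<lambda>x'. Y x' t) x) (at x)"
    unfolding Y2 xderiv_pow_Fk by (simp add: Fk_deriv)
  define s where "s n = - ((l0*real n)^2) / sqrt (1 - (l0*real n)^2)" for n
  have qn: "0 \<le> (l0*real n)^2 \<and> (l0*real n)^2 < 1" if "n \<in> N" for n
  proof -
    have "0 \<le> l0 * real n" "l0 * real n < 1" using that l0pos unfolding N_def by (auto simp: mult_ac)
    then show ?thesis by (simp add: power_less_one_iff abs_square_less_1)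
  qed
  have ser_n: "(\<lambda>k. (-1)^(k+1) * ((-1/2) gchoose k) * (l0*real n)^(2*k+2)) sums s n" if "n \<in> N" for n
    unfolding s_def using ser[of "(l0*real n)^2" "l0*real n"] qn[OF that] by simp
  have ev: "(- x::real)^(2*k+2) = x^(2*k+2)" for x k
  proof -
    have e: "2*k+2 = 2*(k+1)" by simp
    show ?thesis unfolding e by (rule power_minus_even) simp
  qed
  have P3: "\<forall>x t. \<exists>S. (\<lambda>k. complex_of_real ((-1)^(k+1) * ((-1/2) gchoose k) * (hbar/(m0*c))^(2*k+2))
                         * (xderiv ^^ (2*k+2)) (\<lambda>x'. Y x' t) x) sums S
                 \<and> \<i> * complex_of_real hbar * vector_derivative (\<lambda>t'. Y x t') (at t)
                     = complex_of_real E0 * Y x t + complex_of_real (E0/2) * S"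
  proof (intro allI exI conjI)
    fix x t
    define S where "S = (\<Sum>n\<in>N. (A t n * complex_of_real (exp (- real n * x))) * complex_of_real (s n))"
    have terms: "(\<lambda>k. complex_of_real ((-1)^(k+1) * ((-1/2) gchoose k) * (hbar/(m0*c))^(2*k+2))
                         * (xderiv ^^ (2*k+2)) (\<lambda>x'. Y x' t) x)
       = (\<lambda>k. \<Sum>n\<in>N. (A t n * complex_of_real (exp (- real n * x))) * complex_of_real ((-1)^(k+1) * ((-1/2) gchoose k) * (l0*real n)^(2*k+2)))"
    proof
      fix k
      show "complex_of_real ((-1)^(k+1) * ((-1/2) gchoose k) * (hbar/(m0*c))^(2*k+2))
                         * (xderiv ^^ (2*k+2)) (\<lambda>x'. Y x' t) x
         = (\<Sum>n\<in>N. (A t n * complex_of_real (exp (- real n * x))) * complex_of_real ((-1)^(k+1) * ((-1/2) gchoose k) * (l0*real n)^(2*k+2)))"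
        unfolding Y2 xderiv_pow_Fk unfolding hb Fk_def ev
        by (simp add: sum_distrib_left power_mult_distrib mult_ac sum_negf)
    qed
    show "(\<lambda>k. complex_of_real ((-1)^(k+1) * ((-1/2) gchoose k) * (hbar/(m0*c))^(2*k+2))
                         * (xderiv ^^ (2*k+2)) (\<lambda>x'. Y x' t) x) sums S"
      unfolding terms S_def
      by (intro sums_sum sums_mult sums_of_real ser_n)
    have key: "- (hbar * b n) = E0 + E0/2 * s n" if "n \<in> N" for n
    proof -
      have q: "\<bar>l0^2 * (real n)^2 - 1\<bar> = 1 - (l0*real n)^2" using qn[OF that] by (simp add: power_mult_distrib)
      have sq: "sqrt (1 - (l0*real n)^2) > 0" using qn[OF that] by simp
      show ?thesis unfolding b_def w_def s_def q using sq hbar_pos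
        by (simp add: field_simps power_mult_distrib)
    qed
    have term_eq: "\<i> * complex_of_real hbar * ((f n * complex_of_real (exp (- real n * x))) * (\<i> * complex_of_real (b n) * exp (\<i> * complex_of_real (b n * t))))
       = complex_of_real E0 * (A t n * complex_of_real (exp (- real n * x))) + complex_of_real (E0/2) * ((A t n * complex_of_real (exp (- real n * x))) * complex_of_real (s n))"
      if "n \<in> N" for n
    proof -
      have "complex_of_real (- (hbar * b n)) = complex_of_real (E0 + E0/2 * s n)" using key[OF that] by simp
      then have k2: "- (complex_of_real hbar * complex_of_real (b n)) = complex_of_real E0 + complex_of_real (E0/2) * complex_of_real (s n)"
        by simp
      have "\<i> * complex_of_real hbar * ((f n * complex_of_real (exp (- real n * x))) * (\<i> * complex_of_real (b n) * exp (\<i> * complex_of_real (b n * t))))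
          = (- (complex_of_real hbar * complex_of_real (b n))) * (f n * complex_of_real (exp (- real n * x)) * exp (\<i> * complex_of_real (b n * t)))"
        by (simp add: algebra_simps)
      also have "\<dots> = (complex_of_real E0 + complex_of_real (E0/2) * complex_of_real (s n)) * (f n * complex_of_real (exp (- real n * x)) * exp (\<i> * complex_of_real (b n * t)))"
        unfolding k2 ..
      also have "\<dots> = complex_of_real E0 * (A t n * complex_of_real (exp (- real n * x))) + complex_of_real (E0/2) * ((A t n * complex_of_real (exp (- real n * x))) * complex_of_real (s n))"
        unfolding Aeq by (simp add: algebra_simps)
      finally show ?thesis .
    qed
    show "\<i> * complex_of_real hbar * vector_derivative (\<lambda>t'. Y x t') (at t)
                     = complex_of_real E0 * Y x t + complex_of_real (E0/2) * S"
      unfolding vD D_def unfolding Y1 S_def sum_distrib_left sum.distrib[symmetric]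
      using term_eq by (intro sum.cong) auto
  qed
  have P4: "\<forall>x. Y x 0 = (\<Sum>n\<in>{n::nat. n \<ge> 1 \<and> real n * l0 < 1}.
                          f n * complex_of_real (exp (- real n * x)))"
    unfolding Y_def by simp
  show ?thesis using P1 P2 P3 P4 by blast
qed

end
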